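(* Let $\Gamma$ be a Deza graph with parameters $(n,k,k-1,a)$, $k>1$, $\beta=1$. The set of $NA$-vertices of $\Gamma$ can be partitioned into quadruples of the form $\{x,x',x_b,x_b'\}$, where $x_b'=(x')_b=(x_b)'$.
   Context: A Deza graph with parameters $(n,k,b,a)$, $a\le b$, is a $k$-regular graph on $n$ vertices in which any two distinct vertices have $a$ or $b$ common neighbours; $\beta$ is the number of vertices $u\ne v$ with exactly $b$ common neighbours with a given vertex $v$. Since $\beta=1$, for each vertex $x$ let $x_b$ denote the unique vertex having $b=k-1$ common neighbours with $x$. A vertex $x$ is an $A$-vertex if $x$ is adjacent to $x_b$, and an $NA$-vertex otherwise. For an $NA$-vertex $x$, $x'$ denotes the unique neighbour of $x$ not adjacent to $x_b$; one has $(x')_b=(x_b)'$, denoted $x_b'$. *)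

theory Defs
  imports Main
begin

definition common_nbrs :: "'a set \<Rightarrow> ('a \<Rightarrow> 'a \<Rightarrow> bool) \<Rightarrow> 'a \<Rightarrow> 'a \<Rightarrow> nat" where
  "common_nbrs V E u v = card {w \<in> V. E u w \<and> E v w}"

definition deza_graph :: "'a set \<Rightarrow> ('a \<Rightarrow> 'a \<Rightarrow> bool) \<Rightarrow> nat \<Rightarrow> nat \<Rightarrow> nat \<Rightarrow> nat \<Rightarrow> bool" where
  "deza_graph V E n k b a \<longleftrightarrow>
     finite V \<and> card V = n \<and>
     (\<forall>u v. E u v \<longrightarrow> u \<in> V \<and> v \<in> V) \<and>
     (\<forall>u v. E u v \<longrightarrow> E v u) \<and>
     (\<forall>v. \<not> E v v) \<and>
     (\<forall>v\<in>V. card {w \<in> V. E v w} = k) \<and>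
     a \<le> b \<and>
     (\<forall>u\<in>V. \<forall>v\<in>V. u \<noteq> v \<longrightarrow> common_nbrs V E u v = a \<or> common_nbrs V E u v = b)"

definition deza_beta :: "'a set \<Rightarrow> ('a \<Rightarrow> 'a \<Rightarrow> bool) \<Rightarrow> nat \<Rightarrow> 'a \<Rightarrow> nat" where
  "deza_beta V E b v = card {u \<in> V. u \<noteq> v \<and> common_nbrs V E v u = b}"

text \<open>x_b: the unique vertex having b common neighbours with x (meaningful when beta = 1).\<close>
definition bvert :: "'a set \<Rightarrow> ('a \<Rightarrow> 'a \<Rightarrow> bool) \<Rightarrow> nat \<Rightarrow> 'a \<Rightarrow> 'a" where
  "bvert V E b x = (THE u. u \<in> V \<and> u \<noteq> x \<and> common_nbrs V E x u = b)"

definition A_vertex :: "'a set \<Rightarrow> ('a \<Rightarrow> 'a \<Rightarrow> bool) \<Rightarrow> nat \<Rightarrow> 'a \<Rightarrow> bool" where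
  "A_vertex V E b x \<longleftrightarrow> x \<in> V \<and> E x (bvert V E b x)"

definition NA_vertex :: "'a set \<Rightarrow> ('a \<Rightarrow> 'a \<Rightarrow> bool) \<Rightarrow> nat \<Rightarrow> 'a \<Rightarrow> bool" where
  "NA_vertex V E b x \<longleftrightarrow> x \<in> V \<and> \<not> E x (bvert V E b x)"

definition nprime :: "'a set \<Rightarrow> ('a \<Rightarrow> 'a \<Rightarrow> bool) \<Rightarrow> nat \<Rightarrow> 'a \<Rightarrow> 'a" where
  "nprime V E b x = (THE y. y \<in> V \<and> E x y \<and> \<not> E y (bvert V E b x))"

end

theory Submission
  imports Defs
begin

lemma single_iff: assumes "{w \<in> V. P w} = {u}" shows "(w \<in> V \<and> P w) = (w = u)"
proof -
  have "w \<in> {w \<in> V. P w} \<longleftrightarrow> w \<in> {u}" using assms by (rule arg_cong)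
  then show ?thesis by simp
qed

lemma single_ex1: assumes "{w \<in> V. P w} = {u}" shows "\<exists>!w. w \<in> V \<and> P w"
  by (simp add: single_iff[OF assms])

locale dz =
  fixes V :: "'a set" and E :: "'a \<Rightarrow> 'a \<Rightarrow> bool" and n k a :: nat
  assumes dg: "deza_graph V E n k (k - 1) a"
    and k1: "k > 1"
    and beta: "\<forall>v\<in>V. deza_beta V E (k - 1) v = 1"
begin

abbreviation "bv x \<equiv> bvert V E (k - 1) x"
abbreviation "pr x \<equiv> nprime V E (k - 1) x"
abbreviation "cn u v \<equiv> common_nbrs V E u v"

lemma fin: "finite V" using dg unfolding deza_graph_def by blast
lemma EV: "E u v \<Longrightarrow> u \<in> V \<and> v \<in> V" using dg unfolding deza_graph_def by blast
lemma Esym: "E u v \<Longrightarrow> E v u" using dg unfolding deza_graph_def by blast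
lemma Eirr: "\<not> E v v" using dg unfolding deza_graph_def by blast
lemma deg: "v \<in> V \<Longrightarrow> card {w \<in> V. E v w} = k" using dg unfolding deza_graph_def by blast
lemma ab: "a \<le> k - 1" using dg unfolding deza_graph_def by blast
lemma cnv: "u \<in> V \<Longrightarrow> v \<in> V \<Longrightarrow> u \<noteq> v \<Longrightarrow> cn u v = a \<or> cn u v = k - 1"
  using dg unfolding deza_graph_def by blast

lemma neq1: "E u v \<Longrightarrow> u \<noteq> v" using Eirr by blast
lemma neq2: "E u v \<Longrightarrow> \<not> E u w \<Longrightarrow> v \<noteq> w" by blast

lemma Esym': "E u v = E v u" using Esym by blast

lemma cn_sym: "cn u v = cn v u"
  unfolding common_nbrs_def by (metis (no_types, lifting) Collect_cong)

lemma cn_self: "v \<in> V \<Longrightarrow> cn v v = k"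
  unfolding common_nbrs_def using deg by simp

lemma b_ex1: assumes "v \<in> V" shows "\<exists>!u. u \<in> V \<and> u \<noteq> v \<and> cn v u = k - 1"
proof -
  have "card {u \<in> V. u \<noteq> v \<and> cn v u = k - 1} = 1"
    using beta assms unfolding deza_beta_def by blast
  then obtain u where "{u \<in> V. u \<noteq> v \<and> cn v u = k - 1} = {u}"
    using card_1_singletonE by blast
  then show ?thesis by (rule single_ex1)
qed

lemma b_props: assumes "v \<in> V" shows "bv v \<in> V \<and> bv v \<noteq> v \<and> cn v (bv v) = k - 1"
  using theI'[OF b_ex1[OF assms]] unfolding bvert_def by blast

lemma b_uniq: assumes "v \<in> V" "u \<in> V" "u \<noteq> v" "cn v u = k - 1" shows "u = bv v"
  using b_ex1[OF assms(1)] b_props[OF assms(1)] assms by blast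

lemma bb: assumes "v \<in> V" shows "bv (bv v) = v"
  using b_props[OF assms] b_uniq[of "bv v" v] assms cn_sym by metis

lemma cn_val: assumes "z \<in> V" "u \<in> V"
  shows "cn z u = a + (if z = u then k - a else 0) + (if z = bv u then k - 1 - a else 0)"
proof -
  have ne: "bv u \<noteq> u" using b_props assms by blast
  show ?thesis
  proof (cases "z = u")
    case True then show ?thesis using cn_self assms ne ab k1 by auto
  next
    case False
    show ?thesis
    proof (cases "z = bv u")
      case True then show ?thesis using b_props[OF assms(2)] cn_sym False ab by auto
    next
      case F2: False
      have "cn u z \<noteq> k - 1" using b_uniq[of u z] assms False F2 by metis
      then have "cn z u = a" using cnv[OF assms] False cn_sym by metis
      then show ?thesis using False F2 by simp
    qed
  qed
qed

lemma walk: assumes "v \<in> V" "u \<in> V"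
  shows "(\<Sum>z\<in>{z\<in>V. E v z}. cn z u) = (\<Sum>w\<in>{w\<in>V. E u w}. cn v w)"
proof -
  have f: "finite {z\<in>V. E v z}" "finite {w\<in>V. E u w}" using fin by auto
  have "(\<Sum>z\<in>{z\<in>V. E v z}. cn z u) = card (Sigma {z\<in>V. E v z} (\<lambda>z. {w\<in>V. E z w \<and> E u w}))"
    using f fin by (simp add: card_SigmaI common_nbrs_def)
  also have "Sigma {z\<in>V. E v z} (\<lambda>z. {w\<in>V. E z w \<and> E u w})
      = prod.swap ` Sigma {w\<in>V. E u w} (\<lambda>w. {z\<in>V. E v z \<and> E w z})"
    using Esym by (auto simp: image_iff)
  also have "card \<dots> = card (Sigma {w\<in>V. E u w} (\<lambda>w. {z\<in>V. E v z \<and> E w z}))"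
    by (rule card_image) (simp add: inj_on_def)
  also have "\<dots> = (\<Sum>w\<in>{w\<in>V. E u w}. cn v w)"
    using f fin by (simp add: card_SigmaI common_nbrs_def)
  finally show ?thesis .
qed

lemma sumval: assumes "v \<in> V" "u \<in> V"
  shows "(\<Sum>z\<in>{z\<in>V. E v z}. cn z u) = k * a + (if E v u then k - a else 0) + (if E v (bv u) then k - 1 - a else 0)"
proof -
  have f: "finite {z\<in>V. E v z}" using fin by auto
  have "(\<Sum>z\<in>{z\<in>V. E v z}. cn z u) = (\<Sum>z\<in>{z\<in>V. E v z}. a + (if z = u then k - a else 0) + (if z = bv u then k - 1 - a else 0))"
    using cn_val assms by (intro sum.cong) auto
  also have "\<dots> = (\<Sum>z\<in>{z\<in>V. E v z}. a) + (\<Sum>z\<in>{z\<in>V. E v z}. (if z = u then k - a else 0)) + (\<Sum>z\<in>{z\<in>V. E v z}. (if z = bv u then k - 1 - a else 0))"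
    by (simp add: sum.distrib)
  also have "\<dots> = k * a + (if E v u then k - a else 0) + (if E v (bv u) then k - 1 - a else 0)"
    using f deg[OF assms(1)] assms b_props[OF assms(2)] by (simp add: sum.delta')
  finally show ?thesis .
qed

lemma a_lt: assumes "V \<noteq> {}" shows "a < k - 1"
proof (rule ccontr)
  assume "\<not> a < k - 1"
  then have aeq: "a = k - 1" using ab by simp
  obtain v where v: "v \<in> V" using assms by blast
  have "{u \<in> V. u \<noteq> v \<and> cn v u = k - 1} = V - {v}"
    using cnv[OF v] aeq by auto
  then have "card (V - {v}) = 1" using beta v unfolding deza_beta_def by auto
  moreover have "{w \<in> V. E v w} \<subseteq> V - {v}" using Eirr by auto
  moreover have "card {w \<in> V. E v w} \<le> card (V - {v})"
    using fin calculation(2) by (intro card_mono) auto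
  ultimately have "card {w \<in> V. E v w} \<le> 1" by simp
  then show False using deg[OF v] k1 by simp
qed

lemma swapE: assumes "v \<in> V" "u \<in> V" shows "E v (bv u) \<longleftrightarrow> E u (bv v)"
proof -
  have ne: "V \<noteq> {}" using assms by blast
  have "k * a + (if E v u then k - a else 0) + (if E v (bv u) then k - 1 - a else 0)
      = k * a + (if E u v then k - a else 0) + (if E u (bv v) then k - 1 - a else 0)"
  proof -
    have "(\<Sum>w\<in>{w\<in>V. E u w}. cn v w) = (\<Sum>w\<in>{w\<in>V. E u w}. cn w v)"
      using cn_sym by (intro sum.cong) auto
    then show ?thesis using walk[OF assms] sumval[OF assms] sumval[OF assms(2,1)] by simp
  qed
  then show ?thesis using a_lt[OF ne] Esym' by (auto split: if_splits)
qed

lemma commE: assumes "E v w" shows "E (bv v) (bv w)"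
proof -
  have V: "v \<in> V" "w \<in> V" using EV assms by auto
  have "bv w \<in> V" using b_props V by blast
  then have "E v (bv (bv w)) \<longleftrightarrow> E (bv w) (bv v)" using swapE V by blast
  then show ?thesis using bb V assms Esym by metis
qed

lemma diff1: assumes "v \<in> V"
  shows "card ({w\<in>V. E v w} - {w\<in>V. E (bv v) w}) = 1"
proof -
  have "{w\<in>V. E v w} \<inter> {w\<in>V. E (bv v) w} = {w\<in>V. E v w \<and> E (bv v) w}" by auto
  then have "card ({w\<in>V. E v w} \<inter> {w\<in>V. E (bv v) w}) = k - 1"
    using b_props[OF assms] unfolding common_nbrs_def by simp
  then show ?thesis using card_Diff_subset_Int[of "{w\<in>V. E v w}" "{w\<in>V. E (bv v) w}"] fin
    deg[OF assms] k1 by simp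
qed

lemma NA_ex1: assumes "x \<in> V" "\<not> E x (bv x)"
  shows "\<exists>!y. y \<in> V \<and> E x y \<and> \<not> E y (bv x)"
proof -
  have eq: "{w\<in>V. E x w} - {w\<in>V. E (bv x) w} = {w\<in>V. E x w \<and> \<not> E w (bv x)}"
    using Esym' by auto
  obtain y where y: "{w\<in>V. E x w \<and> \<not> E w (bv x)} = {y}"
    using diff1[OF assms(1)] card_1_singletonE unfolding eq by blast
  then show ?thesis by (rule single_ex1)
qed

lemma p_props: assumes "x \<in> V" "\<not> E x (bv x)"
  shows "pr x \<in> V \<and> E x (pr x) \<and> \<not> E (pr x) (bv x)"
  using theI'[OF NA_ex1[OF assms]] unfolding nprime_def by blast

lemma p_uniq: assumes "x \<in> V" "\<not> E x (bv x)" "y \<in> V" "E x y" "\<not> E y (bv x)"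
  shows "y = pr x"
  using NA_ex1[OF assms(1,2)] p_props[OF assms(1,2)] assms(3-5) by blast

lemma Aclose: assumes "v \<in> V" "E v (bv v)" "E v w" "w \<noteq> bv v" shows "E (bv v) w"
proof -
  have eq: "{w\<in>V. E v w} - {w\<in>V. E (bv v) w} = {w\<in>V. E v w \<and> \<not> E (bv v) w}"
    by auto
  obtain y where y: "{w\<in>V. E v w \<and> \<not> E (bv v) w} = {y}"
    using diff1[OF assms(1)] card_1_singletonE unfolding eq by blast
  have yy: "\<And>z. (z \<in> V \<and> E v z \<and> \<not> E (bv v) z) = (z = y)"
    using single_iff[OF y] by simp
  have "bv v \<in> V" using assms(2) EV by blast
  then have "y = bv v" using yy[of "bv v"] assms(2) Eirr by simp
  have "w \<in> V" using assms(3) EV by blast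
  then show ?thesis using yy[of w] \<open>y = bv v\<close> assms(3,4) by auto
qed

definition "Qd y = {y, pr y, bv y, bv (pr y)}"

context
  fixes x assumes xV: "x \<in> V" and xNA: "\<not> E x (bv x)"
begin

lemma bxV: "bv x \<in> V" using b_props xV by blast
lemma bxNA: "\<not> E (bv x) (bv (bv x))" using bb xV xNA Esym' by simp
lemma pxP: "pr x \<in> V" "E x (pr x)" "\<not> E (pr x) (bv x)" using p_props[OF xV xNA] by auto
lemma pbxP: "pr (bv x) \<in> V" "E (bv x) (pr (bv x))" "\<not> E (pr (bv x)) x"
  using p_props[OF bxV bxNA] bb[OF xV] by auto

lemma bp: "bv (pr x) = pr (bv x)"
proof (rule p_uniq[OF bxV bxNA])
  show "bv (pr x) \<in> V" using b_props pxP by blast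
  show "E (bv x) (bv (pr x))" using commE pxP by blast
  show "\<not> E (bv (pr x)) (bv (bv x))"
  proof
    assume "E (bv (pr x)) (bv (bv x))"
    then have "E (bv (pr x)) x" using bb xV by simp
    then have "E (bv (bv (pr x))) (bv x)" using commE by blast
    then show False using bb pxP by simp
  qed
qed

lemma pNA: "\<not> E (pr x) (bv (pr x))"
proof
  assume h: "E (pr x) (bv (pr x))"
  have "x \<noteq> bv (pr x)" using bp pbxP(2) xNA Esym' by auto
  then have "E (bv (pr x)) x" using Aclose[OF pxP(1) h] pxP(2) Esym' by blast
  then show False using bp pbxP(3) by simp
qed

lemma pp: "pr (pr x) = x"
proof -
  have "x = pr (pr x)"
    by (rule p_uniq[OF pxP(1) pNA xV]) (use pxP Esym' bp pbxP in auto)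
  then show ?thesis by simp
qed

lemma Qp_l: "Qd (pr x) = Qd x" unfolding Qd_def
    using pp bp by auto

lemma Qb_l: "Qd (bv x) = Qd x" unfolding Qd_def
    using bp bb[OF xV] bb[OF pxP(1)] by auto

lemma Q_card: "card (Qd x) = 4"
proof -
  have d1: "x \<noteq> pr x" using neq1[OF pxP(2)] .
  have d2: "x \<noteq> bv x" using b_props[OF xV] by auto
  have d3: "x \<noteq> bv (pr x)" unfolding bp
    using neq2[OF pbxP(2), of x] xNA Esym' by auto
  have d4: "pr x \<noteq> bv x" using neq2[OF pxP(2) xNA] .
  have d5: "pr x \<noteq> bv (pr x)" using b_props[OF pxP(1)] by auto
  have d6: "bv x \<noteq> bv (pr x)"
  proof
    assume "bv x = bv (pr x)"
    then have "bv (bv x) = bv (bv (pr x))" by simp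
    then show False using bb[OF xV] bb[OF pxP(1)] d1 by simp
  qed
  show ?thesis unfolding Qd_def using d1 d2 d3 d4 d5 d6 by simp
qed

end

lemma NA_iff: "NA_vertex V E (k - 1) y \<longleftrightarrow> y \<in> V \<and> \<not> E y (bv y)"
  unfolding NA_vertex_def by simp

lemma Q_mem: assumes "x \<in> V" "\<not> E x (bv x)" "z \<in> Qd x"
  shows "z \<in> V \<and> \<not> E z (bv z) \<and> Qd z = Qd x"
proof -
  note pxP[OF assms(1,2)] bxV[OF assms(1,2)] bxNA[OF assms(1,2)] pNA[OF assms(1,2)]
    bp[OF assms(1,2)] pp[OF assms(1,2)] bb[OF assms(1)]
  have "bv (pr x) \<in> V" using b_props pxP[OF assms(1,2)] by blast
  have Qp: "Qd (pr x) = Qd x" using Qp_l[OF assms(1,2)] .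
  have Qb: "Qd (bv x) = Qd x" using Qb_l[OF assms(1,2)] .
  have Qbp: "Qd (bv (pr x)) = Qd x"
    using Qp Qb_l[OF pxP(1)[OF assms(1,2)] pNA[OF assms(1,2)]] by simp
  have bpNA: "\<not> E (bv (pr x)) (bv (bv (pr x)))"
    using bxNA[OF pxP(1)[OF assms(1,2)] pNA[OF assms(1,2)]] .
  have bxNA': "\<not> E (bv x) (bv (bv x))" using bxNA[OF assms(1,2)] .
  have "z = x \<or> z = pr x \<or> z = bv x \<or> z = bv (pr x)" using assms(3) unfolding Qd_def by blast
  then show ?thesis
  proof (elim disjE)
    assume "z = x" then show ?thesis using assms(1,2) by simp
  next
    assume h: "z = pr x" show ?thesis unfolding h using Qp pxP(1)[OF assms(1,2)] pNA[OF assms(1,2)] by blast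
  next
    assume h: "z = bv x" show ?thesis unfolding h using Qb bxV[OF assms(1,2)] bxNA' by blast
  next
    assume h: "z = bv (pr x)" show ?thesis unfolding h using Qbp \<open>bv (pr x) \<in> V\<close> bpNA by blast
  qed
qed

lemma main: "\<exists>P. \<Union>P = {x. NA_vertex V E (k - 1) x} \<and>
             (\<forall>Q\<in>P. \<forall>R\<in>P. Q \<noteq> R \<longrightarrow> Q \<inter> R = {}) \<and>
             (\<forall>Q\<in>P. card Q = 4 \<and>
                (\<exists>x\<in>Q. Q = {x, nprime V E (k - 1) x, bvert V E (k - 1) x,
                             bvert V E (k - 1) (nprime V E (k - 1) x)} \<and>
                        bvert V E (k - 1) (nprime V E (k - 1) x)
                          = nprime V E (k - 1) (bvert V E (k - 1) x)))"
proof (intro exI[of _ "Qd ` {x. x \<in> V \<and> \<not> E x (bv x)}"] conjI ballI impI)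
  show "\<Union> (Qd ` {x. x \<in> V \<and> \<not> E x (bv x)}) = {x. NA_vertex V E (k - 1) x}"
  proof
    show "\<Union> (Qd ` {x. x \<in> V \<and> \<not> E x (bv x)}) \<subseteq> {x. NA_vertex V E (k - 1) x}"
      using Q_mem unfolding NA_iff by blast
    show "{x. NA_vertex V E (k - 1) x} \<subseteq> \<Union> (Qd ` {x. x \<in> V \<and> \<not> E x (bv x)})"
      unfolding NA_iff Qd_def by blast
  qed
next
  fix Q R assume "Q \<in> Qd ` {x. x \<in> V \<and> \<not> E x (bv x)}" "R \<in> Qd ` {x. x \<in> V \<and> \<not> E x (bv x)}" "Q \<noteq> R"
  then show "Q \<inter> R = {}" using Q_mem by blast
next
  fix Q assume "Q \<in> Qd ` {x. x \<in> V \<and> \<not> E x (bv x)}"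
  then obtain x where x: "x \<in> V" "\<not> E x (bv x)" "Q = Qd x" by blast
  show "card Q = 4" using Q_card x by simp
  show "\<exists>x\<in>Q. Q = {x, nprime V E (k - 1) x, bvert V E (k - 1) x,
                             bvert V E (k - 1) (nprime V E (k - 1) x)} \<and>
                        bvert V E (k - 1) (nprime V E (k - 1) x)
                          = nprime V E (k - 1) (bvert V E (k - 1) x)"
    using x bp[OF x(1,2)] unfolding Qd_def by blast
qed

end

theorem lemma14:
  fixes V :: "'a set" and E :: "'a \<Rightarrow> 'a \<Rightarrow> bool" and n k a :: nat
  assumes "deza_graph V E n k (k - 1) a"
    and "k > 1"
    and "\<forall>v\<in>V. deza_beta V E (k - 1) v = 1"
  shows "\<exists>P. \<Union>P = {x. NA_vertex V E (k - 1) x} \<and>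
             (\<forall>Q\<in>P. \<forall>R\<in>P. Q \<noteq> R \<longrightarrow> Q \<inter> R = {}) \<and>
             (\<forall>Q\<in>P. card Q = 4 \<and>
                (\<exists>x\<in>Q. Q = {x, nprime V E (k - 1) x, bvert V E (k - 1) x,
                             bvert V E (k - 1) (nprime V E (k - 1) x)} \<and>
                        bvert V E (k - 1) (nprime V E (k - 1) x)
                          = nprime V E (k - 1) (bvert V E (k - 1) x)))"
proof -
  interpret dz V E n k a using assms by unfold_locales
  show ?thesis by (rule main)
qed

end
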